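(* Let $(S,\mathcal{A},\mu)$ be a complete, $\sigma$-finite measure space and $X$ an alternatively octahedral real Banach space. Then $L^1(\mu,X)$ and $L^\infty(\mu,X)$ are also alternatively octahedral.
   Context: A real Banach space $X$ is alternatively octahedral (AOH) if for every $n\in\mathbb{N}$, all $x_1,\dots,x_n\in S_X$ (the unit sphere) and every $\varepsilon>0$ there is $y\in S_X$ with $\max\{\|x_i+y\|,\|x_i-y\|\}\ge2-\varepsilon$ for all $i=1,\dots,n$. $L^1(\mu,X)$, $L^\infty(\mu,X)$ are the Lebesgue–Bochner spaces. *)

theory Defs
  imports "HOL-Analysis.Analysis" "HOL-Probability.Essential_Supremum" "HOL-Library.Function_Algebras"
begin

text \<open>Quotienting by the
  kernel of N does not change the property, since only N-values are involved.\<close>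
definition alt_octahedral :: "'v::{plus,minus} set \<Rightarrow> ('v \<Rightarrow> real) \<Rightarrow> bool" where
  "alt_octahedral V N \<longleftrightarrow>
     (\<forall>n::nat. n \<ge> 1 \<longrightarrow> (\<forall>x :: nat \<Rightarrow> 'v. (\<forall>i<n. x i \<in> V \<and> N (x i) = 1) \<longrightarrow>
        (\<forall>\<epsilon>>0. \<exists>y\<in>V. N y = 1 \<and>
           (\<forall>i<n. max (N (x i + y)) (N (x i - y)) \<ge> 2 - \<epsilon>))))"

definition strongly_measurable :: "'a measure \<Rightarrow> ('a \<Rightarrow> 'b::real_normed_vector) \<Rightarrow> bool" where
  "strongly_measurable M f \<longleftrightarrow>
     (\<exists>s :: nat \<Rightarrow> 'a \<Rightarrow> 'b. (\<forall>i. simple_function M (s i)) \<and>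
        (AE x in M. (\<lambda>i. s i x) \<longlonglongrightarrow> f x))"

text \<open>Lebesgue--Bochner space L^1(M,X), represented by functions (not classes).\<close>
definition L1_space :: "'a measure \<Rightarrow> ('a \<Rightarrow> 'b::real_normed_vector) set" where
  "L1_space M = {f. strongly_measurable M f \<and> (\<integral>\<^sup>+ x. ennreal (norm (f x)) \<partial>M) < \<infinity>}"

definition L1_norm :: "'a measure \<Rightarrow> ('a \<Rightarrow> 'b::real_normed_vector) \<Rightarrow> real" where
  "L1_norm M f = enn2real (\<integral>\<^sup>+ x. ennreal (norm (f x)) \<partial>M)"

definition Linf_space :: "'a measure \<Rightarrow> ('a \<Rightarrow> 'b::real_normed_vector) set" where
  "Linf_space M = {f. strongly_measurable M f \<and> esssup M (\<lambda>x. ereal (norm (f x))) < \<infinity>}"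

definition Linf_norm :: "'a measure \<Rightarrow> ('a \<Rightarrow> 'b::real_normed_vector) \<Rightarrow> real" where
  "Linf_norm M f = real_of_ereal (esssup M (\<lambda>x. ereal (norm (f x))))"

end

theory Submission
  imports Defs
begin

lemma sm_simple: "simple_function M g \<Longrightarrow> strongly_measurable M g"
  unfolding strongly_measurable_def by (rule exI[of _ "\<lambda>i. g"]) auto

lemma sm_add_simple:
  assumes "strongly_measurable M f" "simple_function M g"
  shows "strongly_measurable M (\<lambda>x. f x + g x)"
proof -
  obtain s where s: "\<And>i. simple_function M (s i)" "AE x in M. (\<lambda>i. s i x) \<longlonglongrightarrow> f x"
    using assms(1) unfolding strongly_measurable_def by blast
  show ?thesis unfolding strongly_measurable_def
  proof (intro exI conjI allI)
    show "simple_function M (\<lambda>x. s i x + g x)" for i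
      using simple_function_compose2[OF s(1) assms(2)] .
    show "AE x in M. (\<lambda>i. s i x + g x) \<longlonglongrightarrow> f x + g x"
      using s(2) by eventually_elim (auto intro: tendsto_intros)
  qed
qed

lemma complete_AE_meas:
  assumes "complete_measure M" "g \<in> borel_measurable M" "AE x in M. f x = g x"
  shows "f \<in> borel_measurable M"
proof (rule measurableI)
  fix A :: "'b set" assume A: "A \<in> sets borel"
  have "g -` A \<inter> space M \<in> sets M" using assms(2) A by (rule measurable_sets)
  moreover have "AE x in M. x \<in> g -` A \<inter> space M \<longleftrightarrow> x \<in> f -` A \<inter> space M"
    using assms(3) by eventually_elim auto
  ultimately show "f -` A \<inter> space M \<in> sets M"
    using complete_measure.in_sets_AE[OF assms(1)] by blast
qed auto

lemma sm_norm_meas: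
  assumes "complete_measure M" "strongly_measurable M f"
  shows "(\<lambda>x. norm (f x)) \<in> borel_measurable M"
proof -
  obtain s where s: "\<And>i. simple_function M (s i)" "AE x in M. (\<lambda>i. s i x) \<longlonglongrightarrow> f x"
    using assms(2) unfolding strongly_measurable_def by blast
  have m: "(\<lambda>x. norm (s i x)) \<in> borel_measurable M" for i
    by (rule borel_measurable_simple_function, rule simple_function_compose1, rule s(1))
  have "(\<lambda>x. lim (\<lambda>i. norm (s i x))) \<in> borel_measurable M"
    by (rule borel_measurable_lim_metric, rule m)
  moreover have "AE x in M. norm (f x) = lim (\<lambda>i. norm (s i x))"
    using s(2) by eventually_elim (metis limI tendsto_norm)
  ultimately show ?thesis by (rule complete_AE_meas[OF assms(1)])
qed

lemma pos_exists:
  assumes "A \<in> sets M" "emeasure M A > 0" "AE x in M. x \<in> A \<longrightarrow> P x"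
  shows "\<exists>x\<in>A. P x"
proof (rule ccontr)
  assume "\<not> ?thesis"
  then have nx: "\<And>x. x \<in> A \<Longrightarrow> \<not> P x" by blast
  from assms(3) have "AE x in M. x \<notin> A" by eventually_elim (use nx in auto)
  then obtain N where N: "{x\<in>space M. \<not> x \<notin> A} \<subseteq> N" "emeasure M N = 0" "N \<in> sets M"
    by (rule AE_E)
  have "A \<subseteq> N" using N(1) sets.sets_into_space[OF assms(1)] by auto
  then have "emeasure M A \<le> emeasure M N" using N(3) by (rule emeasure_mono)
  then show False using assms(2) N(2) by simp
qed

lemma localize:
  assumes sm: "strongly_measurable M f" and B: "B \<in> sets M" "emeasure M B > 0" and d: "\<delta> > 0"
  shows "\<exists>A\<in>sets M. A \<subseteq> B \<and> emeasure M A > 0 \<and> (\<exists>v. AE x in M. x \<in> A \<longrightarrow> norm (f x - v) \<le> \<delta>)"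
proof -
  obtain s where s: "\<And>i. simple_function M (s i)" "AE x in M. (\<lambda>i. s i x) \<longlonglongrightarrow> f x"
    using sm unfolding strongly_measurable_def by blast
  define C where "C k = B \<inter> (\<Inter>m. {x\<in>space M. k \<le> m \<longrightarrow> norm (s m x - s k x) \<le> \<delta>})" for k
  have sf: "simple_function M (\<lambda>x. norm (s m x - s k x))" for m k
    by (rule simple_function_compose2[OF s(1) s(1)])
  have Cs: "C k \<in> sets M" for k
  proof -
    have "{x\<in>space M. k \<le> m \<longrightarrow> norm (s m x - s k x) \<le> \<delta>} \<in> sets M" for m
      using borel_measurable_simple_function[OF sf[of m k]] by measurable
    then show ?thesis unfolding C_def using B(1) by blast
  qed
  have cov: "AE x in M. x \<in> B \<longrightarrow> x \<in> (\<Union>k. C k)"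
    using s(2)
  proof eventually_elim
    case (elim x)
    show ?case
    proof
      assume xB: "x \<in> B"
      from LIMSEQ_imp_Cauchy[OF elim] obtain k where k: "\<forall>m\<ge>k. \<forall>n\<ge>k. norm (s m x - s n x) < \<delta>"
        using CauchyD d by blast
      have "x \<in> C k" unfolding C_def using xB k sets.sets_into_space[OF B(1)] by force
      then show "x \<in> (\<Union>k. C k)" by blast
    qed
  qed
  have "emeasure M B \<le> emeasure M (\<Union>k. C k)"
    by (rule emeasure_mono_AE[OF cov]) (use Cs in blast)
  then have "(\<Union>k. C k) \<notin> null_sets M" using B(2) by auto
  then obtain k where k: "C k \<notin> null_sets M" using null_sets_UN by blast
  have fin: "finite (s k ` space M)" by (rule simple_functionD(1)[OF s(1)])
  define D where "D v = C k \<inter> (s k -` {v} \<inter> space M)" for v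
  have Ds: "D v \<in> sets M" for v unfolding D_def using Cs simple_functionD(2)[OF s(1)] by blast
  have "C k = (\<Union>v\<in>s k ` space M. D v)" unfolding D_def using Cs[of k] sets.sets_into_space by blast
  then obtain v where v: "D v \<notin> null_sets M"
    using k null_sets_UN'[OF countable_finite[OF fin], of D M] by auto
  show ?thesis
  proof (intro bexI conjI exI)
    show "D v \<subseteq> B" unfolding D_def C_def by blast
    show "emeasure M (D v) > 0" using v Ds[of v] by (auto simp: null_sets_def zero_less_iff_neq_zero)
    show "D v \<in> sets M" by (rule Ds)
    show "AE x in M. x \<in> D v \<longrightarrow> norm (f x - v) \<le> \<delta>"
      using s(2)
    proof eventually_elim
      case (elim x)
      show ?case
      proof
        assume x: "x \<in> D v"
        have "(\<lambda>m. norm (s m x - v)) \<longlonglongrightarrow> norm (f x - v)"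
          by (intro tendsto_intros elim)
        moreover have "\<forall>m\<ge>k. norm (s m x - v) \<le> \<delta>" using x unfolding D_def C_def by auto
        ultimately show "norm (f x - v) \<le> \<delta>" using LIMSEQ_le_const2 by blast
      qed
    qed
  qed
qed

lemma localize_many:
  fixes n :: nat
  assumes "\<forall>i<n. strongly_measurable M (f i)" "B \<in> sets M" "emeasure M B > 0" "\<delta> > 0"
  shows "\<exists>A\<in>sets M. A \<subseteq> B \<and> emeasure M A > 0 \<and>
     (\<exists>v. \<forall>i<n. AE x in M. x \<in> A \<longrightarrow> norm (f i x - v i) \<le> \<delta>)"
  using assms(1)
proof (induction n)
  case 0
  then show ?case using assms(2,3) by blast
next
  case (Suc n)
  then obtain A v where A: "A \<in> sets M" "A \<subseteq> B" "emeasure M A > 0"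
    "\<forall>i<n. AE x in M. x \<in> A \<longrightarrow> norm (f i x - v i) \<le> \<delta>" by auto
  have "strongly_measurable M (f n)" using Suc.prems by auto
  from localize[OF this A(1) A(3) assms(4)] obtain A' w where A': "A' \<in> sets M" "A' \<subseteq> A"
    "emeasure M A' > 0" "AE x in M. x \<in> A' \<longrightarrow> norm (f n x - w) \<le> \<delta>" by blast
  have "\<forall>i<Suc n. AE x in M. x \<in> A' \<longrightarrow> norm (f i x - (v(n := w)) i) \<le> \<delta>"
  proof (intro allI impI)
    fix i assume i: "i < Suc n"
    show "AE x in M. x \<in> A' \<longrightarrow> norm (f i x - (v(n := w)) i) \<le> \<delta>"
    proof (cases "i = n")
      case True then show ?thesis using A'(4) by simp
    next
      case False
      then have "AE x in M. x \<in> A \<longrightarrow> norm (f i x - v i) \<le> \<delta>" using A(4) i by auto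
      then show ?thesis by eventually_elim (use False A'(2) in auto)
    qed
  qed
  then show ?case using A' A(2) by blast
qed

lemma oct_norm:
  fixes a z :: "'b::real_normed_vector"
  assumes "norm z = 1" "a \<noteq> 0" "norm (sgn a + z) \<ge> 2 - \<eta>" "\<eta> \<ge> 0"
  shows "norm (a + z) \<ge> norm a + 1 - \<eta> * max 1 (norm a)"
proof -
  define t where "t = norm a"
  define u where "u = sgn a"
  have t: "t > 0" using assms(2) t_def by simp
  have a: "a = t *\<^sub>R u" unfolding t_def u_def using assms(2) by (simp add: sgn_div_norm)
  have h3: "norm (u + z) \<ge> 2 - \<eta>" using assms(3) u_def by simp
  have nu: "norm u = 1" unfolding u_def using assms(2) by (simp add: norm_sgn)
  show ?thesis
  proof (cases "t \<le> 1")
    case True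
    have e: "u + z = (a + z) + (1 - t) *\<^sub>R u" unfolding a by (simp add: algebra_simps)
    have "norm (u + z) \<le> norm (a + z) + norm ((1 - t) *\<^sub>R u)"
      by (subst e) (rule norm_triangle_ineq)
    also have "norm ((1 - t) *\<^sub>R u) = 1 - t" using True nu by simp
    finally have "norm (u + z) \<le> norm (a + z) + (1 - t)" .
    then show ?thesis using h3 assms(4) True t_def by (simp add: max_def)
  next
    case False
    have e: "t *\<^sub>R (u + z) = (a + z) + (t - 1) *\<^sub>R z" unfolding a by (simp add: algebra_simps)
    have "norm (t *\<^sub>R (u + z)) \<le> norm (a + z) + norm ((t - 1) *\<^sub>R z)"
      by (subst e) (rule norm_triangle_ineq)
    moreover have "norm ((t - 1) *\<^sub>R z) = t - 1" using False assms(1) by simp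
    moreover have "norm (t *\<^sub>R (u + z)) = t * norm (u + z)" using t by simp
    ultimately have "t * norm (u + z) \<le> norm (a + z) + (t - 1)" by linarith
    moreover have "t * (2 - \<eta>) \<le> t * norm (u + z)" using h3 t by simp
    ultimately show ?thesis using False t_def by (simp add: max_def algebra_simps)
  qed
qed

lemma sm_add_const:
  "strongly_measurable M f \<Longrightarrow> strongly_measurable M (\<lambda>x. f x + w)"
  using sm_add_simple[of M f "\<lambda>x. w"] by simp

lemma Linf_lower:
  assumes cm: "complete_measure M" and sm: "strongly_measurable M g"
    and A: "A \<in> sets M" "emeasure M A > 0"
    and lo: "AE x in M. x \<in> A \<longrightarrow> c \<le> norm (g x)"
    and up: "AE x in M. norm (g x) \<le> K"
  shows "c \<le> Linf_norm M g"
proof -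
  have m: "(\<lambda>x. ereal (norm (g x))) \<in> borel_measurable M"
    using sm_norm_meas[OF cm sm] by simp
  have e1: "esssup M (\<lambda>x. ereal (norm (g x))) \<le> ereal K"
    by (rule esssup_I[OF m]) (use up in auto)
  have e2: "ereal c \<le> esssup M (\<lambda>x. ereal (norm (g x)))"
  proof (rule ccontr)
    assume "\<not> ?thesis"
    then have lt: "esssup M (\<lambda>x. ereal (norm (g x))) < ereal c" by simp
    have "AE x in M. x \<in> A \<longrightarrow> False"
      using esssup_AE[of "\<lambda>x. ereal (norm (g x))" M] lo
    proof eventually_elim
      case (elim x)
      show ?case
      proof
        assume xA: "x \<in> A"
        then have "ereal c \<le> ereal (norm (g x))" using elim by simp
        also have "\<dots> \<le> esssup M (\<lambda>x. ereal (norm (g x)))" using elim by simp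
        finally show False using lt by simp
      qed
    qed
    from pos_exists[OF A this] show False by blast
  qed
  from e1 e2 show ?thesis unfolding Linf_norm_def
    by (cases "esssup M (\<lambda>x. ereal (norm (g x)))") auto
qed

lemma Linf_aoh:
  assumes cm: "complete_measure M" and X: "alt_octahedral (UNIV :: 'b::banach set) norm"
  shows "alt_octahedral (Linf_space M :: ('a \<Rightarrow> 'b) set) (Linf_norm M)"
  unfolding alt_octahedral_def
proof (intro allI impI)
  fix n :: nat and f :: "nat \<Rightarrow> 'a \<Rightarrow> 'b" and \<epsilon> :: real
  assume n: "1 \<le> n" and f: "\<forall>i<n. f i \<in> Linf_space M \<and> Linf_norm M (f i) = 1" and e: "\<epsilon> > 0"
  define \<delta> where "\<delta> = min (\<epsilon>/8) (1/4)"
  have d: "\<delta> > 0" "\<delta> \<le> \<epsilon>/8" "\<delta> \<le> 1/4" using e unfolding \<delta>_def by auto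
  have smf: "strongly_measurable M (f i)" if "i < n" for i
    using f that unfolding Linf_space_def by auto
  have mf: "(\<lambda>x. norm (f i x)) \<in> borel_measurable M" if "i < n" for i
    by (rule sm_norm_meas[OF cm smf[OF that]])
  have es: "esssup M (\<lambda>x. ereal (norm (f i x))) = 1" if "i < n" for i
  proof -
    have "real_of_ereal (esssup M (\<lambda>x. ereal (norm (f i x)))) = 1"
      using f that unfolding Linf_norm_def by auto
    then show ?thesis by (cases "esssup M (\<lambda>x. ereal (norm (f i x)))") (auto simp: one_ereal_def)
  qed
  have le1: "AE x in M. norm (f i x) \<le> 1" if "i < n" for i
    using esssup_AE[of "\<lambda>x. ereal (norm (f i x))" M] es[OF that] by (simp add: one_ereal_def)
  define B where "B i = {x\<in>space M. 1 - \<delta> < norm (f i x)}" for i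
  have Bs: "B i \<in> sets M" if "i < n" for i
    unfolding B_def using mf[OF that] by (intro borel_measurable_less) auto
  have Bp: "emeasure M (B i) > 0" if i: "i < n" for i
  proof (rule ccontr)
    assume "\<not> ?thesis"
    then have "B i \<in> null_sets M" using Bs[OF i] by (auto simp: null_sets_def zero_less_iff_neq_zero)
    then have "AE x in M. norm (f i x) \<le> 1 - \<delta>"
      by (rule AE_I') (auto simp: B_def)
    then have "esssup M (\<lambda>x. ereal (norm (f i x))) \<le> ereal (1 - \<delta>)"
      using mf[OF i] by (intro esssup_I) auto
    then show False using es[OF i] d by (simp add: one_ereal_def)
  qed
  define Q where "Q i p \<longleftrightarrow> (i < n \<longrightarrow> (fst p \<in> sets M \<and> fst p \<subseteq> B i \<and> emeasure M (fst p) > 0 \<and>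
      (AE x in M. x \<in> fst p \<longrightarrow> norm (f i x - snd p) \<le> \<delta>)))" for i p
  have "\<forall>i. \<exists>p. Q i p"
  proof
    fix i show "\<exists>p. Q i p"
    proof (cases "i < n")
      case True
      from localize[OF smf[OF True] Bs[OF True] Bp[OF True] d(1)] obtain A' w where
        "A' \<in> sets M" "A' \<subseteq> B i" "emeasure M A' > 0" "AE x in M. x \<in> A' \<longrightarrow> norm (f i x - w) \<le> \<delta>"
        by blast
      then have "Q i (A', w)" unfolding Q_def by simp
      then show ?thesis ..
    qed (auto simp: Q_def)
  qed
  then obtain p where "\<forall>i. Q i (p i)" by (rule choice[THEN exE])
  then have p: "\<And>i. i < n \<Longrightarrow> fst (p i) \<in> sets M \<and> fst (p i) \<subseteq> B i \<and> emeasure M (fst (p i)) > 0 \<and>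
      (AE x in M. x \<in> fst (p i) \<longrightarrow> norm (f i x - snd (p i)) \<le> \<delta>)"
    unfolding Q_def by blast
  define A where "A i = fst (p i)" for i
  define v where "v i = snd (p i)" for i
  have A: "A i \<in> sets M" "A i \<subseteq> B i" "emeasure M (A i) > 0"
      "AE x in M. x \<in> A i \<longrightarrow> norm (f i x - v i) \<le> \<delta>" if "i < n" for i
    using p[OF that] unfolding A_def v_def by auto
  have vb: "1 - 2*\<delta> \<le> norm (v i) \<and> norm (v i) \<le> 1 + \<delta>" if i: "i < n" for i
  proof -
    have "AE x in M. x \<in> A i \<longrightarrow> norm (f i x - v i) \<le> \<delta> \<and> norm (f i x) \<le> 1"
      using A(4)[OF i] le1[OF i] by eventually_elim auto
    from pos_exists[OF A(1)[OF i] A(3)[OF i] this] obtain x where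
      x: "x \<in> A i" "norm (f i x - v i) \<le> \<delta>" "norm (f i x) \<le> 1" by blast
    have "1 - \<delta> < norm (f i x)" using x(1) A(2)[OF i] unfolding B_def by auto
    moreover have "norm (f i x) \<le> norm (v i) + norm (f i x - v i)"
      by (rule norm_triangle_sub)
    moreover have "norm (v i) \<le> norm (f i x) + norm (f i x - v i)"
      using norm_triangle_sub[of "v i" "f i x"] by (simp add: norm_minus_commute)
    ultimately show ?thesis using x by linarith
  qed
  have v0: "v i \<noteq> 0" if "i < n" for i using vb[OF that] d by auto
  have un: "\<forall>i<n. (\<lambda>i. sgn (v i)) i \<in> UNIV \<and> norm ((\<lambda>i. sgn (v i)) i) = 1"
    using v0 by (simp add: norm_sgn)
  note X' = X[unfolded alt_octahedral_def, rule_format, of n "\<lambda>i. sgn (v i)"]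
  have "\<forall>\<epsilon>>0. \<exists>y\<in>UNIV. norm y = 1 \<and> (\<forall>i<n. 2 - \<epsilon> \<le> max (norm (sgn (v i) + y)) (norm (sgn (v i) - y)))"
    using X'[OF n] un by simp
  then obtain z where z: "norm z = 1" "\<forall>i<n. 2 - \<epsilon>/2 \<le> max (norm (sgn (v i) + z)) (norm (sgn (v i) - z))"
    using e by (meson UNIV_I half_gt_zero)
  have sp: "emeasure M (space M) \<noteq> 0"
  proof -
    have "emeasure M (A 0) \<le> emeasure M (space M)" using A(1)[of 0] n sets.sets_into_space by (intro emeasure_mono) auto
    then show ?thesis using A(3)[of 0] n by auto
  qed
  show "\<exists>y\<in>Linf_space M. Linf_norm M y = 1 \<and>
           (\<forall>i<n. 2 - \<epsilon> \<le> max (Linf_norm M (f i + y)) (Linf_norm M (f i - y)))"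
  proof (rule bexI[where x="\<lambda>x. z"])
    show "(\<lambda>x. z) \<in> Linf_space M" unfolding Linf_space_def
      using esssup_const[OF sp, of "ereal (norm z)"] z(1) by (auto intro: sm_simple)
    show "Linf_norm M (\<lambda>x. z) = 1 \<and>
           (\<forall>i<n. 2 - \<epsilon> \<le> max (Linf_norm M (f i + (\<lambda>x. z))) (Linf_norm M (f i - (\<lambda>x. z))))"
      unfolding plus_fun_def fun_diff_def
    proof (intro conjI allI impI)
    show "Linf_norm M (\<lambda>x. z) = 1" unfolding Linf_norm_def
      using esssup_const[OF sp, of "ereal (norm z)"] z(1) by simp
    fix i assume i: "i < n"
    have key: "norm (v i + w) - \<delta> \<le> Linf_norm M (\<lambda>x. f i x + w)" if w: "norm w = 1" for w
    proof (rule Linf_lower[OF cm sm_add_const[OF smf[OF i]] A(1)[OF i] A(3)[OF i]])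
      show "AE x in M. x \<in> A i \<longrightarrow> norm (v i + w) - \<delta> \<le> norm (f i x + w)"
        using A(4)[OF i]
      proof eventually_elim
        case (elim x)
        have "norm (v i + w) \<le> norm (f i x + w) + norm ((v i + w) - (f i x + w))"
          by (rule norm_triangle_sub)
        then have "norm (v i + w) \<le> norm (f i x + w) + norm (f i x - v i)"
          by (simp add: norm_minus_commute)
        then show ?case using elim by auto
      qed
      show "AE x in M. norm (f i x + w) \<le> 2"
        using le1[OF i]
      proof eventually_elim
        case (elim x)
        then show ?case using norm_triangle_ineq[of "f i x" w] w by linarith
      qed
    qed
    have uv: "norm (sgn (v i) - v i) \<le> 2 * \<delta>"
    proof -
      have "sgn (v i) - v i = (1 - norm (v i)) *\<^sub>R sgn (v i)"
        using v0[OF i] by (simp add: sgn_div_norm algebra_simps)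
      then have "norm (sgn (v i) - v i) = \<bar>1 - norm (v i)\<bar>" using v0[OF i] by (simp add: norm_sgn)
      then show ?thesis using vb[OF i] d by auto
    qed
    have t1: "norm (sgn (v i) + w) - 2 * \<delta> \<le> norm (v i + w)" for w
      using norm_triangle_ineq[of "v i + w" "sgn (v i) - v i"] uv by (simp add: algebra_simps)
    have k1: "norm (sgn (v i) + z) - 3 * \<delta> \<le> Linf_norm M (\<lambda>x. f i x + z)"
      using key[OF z(1)] t1[of z] by linarith
    have k2: "norm (sgn (v i) - z) - 3 * \<delta> \<le> Linf_norm M (\<lambda>x. f i x - z)"
      using key[of "- z"] t1[of "- z"] z(1) by simp
    show "2 - \<epsilon> \<le> max (Linf_norm M (\<lambda>x. f i x + z)) (Linf_norm M (\<lambda>x. f i x - z))"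
      using k1 k2 z(2) i d by (auto simp: max_def split: if_splits)
  qed
  qed
qed

lemma L1_of_int:
  assumes cm: "complete_measure M" and sm: "strongly_measurable M g"
    and int: "integrable M (\<lambda>x. norm (g x))"
  shows "g \<in> L1_space M" "L1_norm M g = (\<integral>x. norm (g x) \<partial>M)"
proof -
  have e: "(\<integral>\<^sup>+ x. ennreal (norm (g x)) \<partial>M) = ennreal (\<integral>x. norm (g x) \<partial>M)"
    by (rule nn_integral_eq_integral[OF int]) auto
  show "g \<in> L1_space M" unfolding L1_space_def using sm e by simp
  show "L1_norm M g = (\<integral>x. norm (g x) \<partial>M)" unfolding L1_norm_def e by simp
qed

lemma L1_int:
  assumes cm: "complete_measure M" and g: "g \<in> L1_space M"
  shows "integrable M (\<lambda>x. norm (g x))" "L1_norm M g = (\<integral>x. norm (g x) \<partial>M)"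
proof -
  have sm: "strongly_measurable M g" using g unfolding L1_space_def by simp
  show i: "integrable M (\<lambda>x. norm (g x))"
    by (rule integrableI_bounded) (use sm_norm_meas[OF cm sm] g in \<open>auto simp: L1_space_def\<close>)
  show "L1_norm M g = (\<integral>x. norm (g x) \<partial>M)" by (rule L1_of_int(2)[OF cm sm i])
qed

lemma L1_lower:
  fixes f :: "'a \<Rightarrow> 'b::banach"
  assumes cm: "complete_measure M" and smf: "strongly_measurable M f"
    and intf: "integrable M (\<lambda>x. norm (f x))"
    and A: "A \<in> sets M" "emeasure M A < \<infinity>" and m: "m = measure M A" "m > 0"
    and close: "AE x in M. x \<in> A \<longrightarrow> norm (f x - v) \<le> \<delta>"
  shows "(\<integral>x. norm (f x) \<partial>M) + norm (m *\<^sub>R v + w) - norm (m *\<^sub>R v) - 2*\<delta>*m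
           \<le> L1_norm M (\<lambda>x. f x + indicator A x *\<^sub>R (w /\<^sub>R m))"
proof -
  let ?g = "\<lambda>x. f x + indicator A x *\<^sub>R (w /\<^sub>R m)"
  have sg: "strongly_measurable M ?g"
    by (rule sm_add_simple[OF smf]) (rule simple_function_compose1[OF simple_function_indicator[OF A(1)]])
  have mg: "(\<lambda>x. norm (?g x)) \<in> borel_measurable M" by (rule sm_norm_meas[OF cm sg])
  have iA: "integrable M (\<lambda>x. indicator A x :: real)" using A by simp
  have ib: "integrable M (\<lambda>x. norm (f x) + indicator A x * norm (w /\<^sub>R m))"
    by (rule Bochner_Integration.integrable_add[OF intf]) (simp add: iA)
  have ig: "integrable M (\<lambda>x. norm (?g x))"
  proof (rule Bochner_Integration.integrable_bound[OF ib mg])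
    show "AE x in M. norm (norm (?g x)) \<le> norm (norm (f x) + indicator A x * norm (w /\<^sub>R m))"
      by (intro AE_I2) (auto simp: indicator_def intro: norm_triangle_le)
  qed
  define c where "c = norm (v + w /\<^sub>R m) - norm v - 2 * \<delta>"
  have ilow: "integrable M (\<lambda>x. norm (f x) + c * indicator A x)"
    by (rule Bochner_Integration.integrable_add[OF intf]) (simp add: iA)
  have "AE x in M. norm (f x) + c * indicator A x \<le> norm (?g x)"
    using close
  proof eventually_elim
    case (elim x)
    show ?case
    proof (cases "x \<in> A")
      case True
      then have d: "norm (f x - v) \<le> \<delta>" using elim by simp
      have t1: "norm (v + w /\<^sub>R m) \<le> norm (f x + w /\<^sub>R m) + norm ((v + w /\<^sub>R m) - (f x + w /\<^sub>R m))"
        by (rule norm_triangle_sub)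
      have t2: "norm (f x) \<le> norm v + norm (f x - v)" by (rule norm_triangle_sub)
      have "norm ((v + w /\<^sub>R m) - (f x + w /\<^sub>R m)) = norm (f x - v)"
        by (simp add: norm_minus_commute)
      then show ?thesis using True t1 t2 d unfolding c_def by simp
    qed simp
  qed
  then have "(\<integral>x. norm (f x) + c * indicator A x \<partial>M) \<le> (\<integral>x. norm (?g x) \<partial>M)"
    by (rule integral_mono_AE[OF ilow ig])
  moreover have "(\<integral>x. norm (f x) + c * indicator A x \<partial>M) = (\<integral>x. norm (f x) \<partial>M) + c * m"
    using intf iA A(1) m(1) by (simp add: Int_absorb2 sets.sets_into_space)
  moreover have "c * m = norm (m *\<^sub>R v + w) - norm (m *\<^sub>R v) - 2*\<delta>*m"
  proof -
    have "m *\<^sub>R (v + w /\<^sub>R m) = m *\<^sub>R v + w" using m(2) by (simp add: algebra_simps)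
    then have "norm (m *\<^sub>R v + w) = m * norm (v + w /\<^sub>R m)" using m(2)
      by (metis abs_of_pos norm_scaleR)
    then show ?thesis unfolding c_def using m(2) by (simp add: algebra_simps)
  qed
  moreover have "L1_norm M ?g = (\<integral>x. norm (?g x) \<partial>M)" by (rule L1_of_int(2)[OF cm sg ig])
  ultimately show ?thesis by linarith
qed

lemma L1_upper:
  fixes f :: "'a \<Rightarrow> 'b::banach"
  assumes intf: "integrable M (\<lambda>x. norm (f x))"
    and A: "A \<in> sets M" "emeasure M A < \<infinity>" and m: "m = measure M A"
    and close: "AE x in M. x \<in> A \<longrightarrow> norm (f x - v) \<le> \<delta>"
  shows "m * (norm v - \<delta>) \<le> (\<integral>x. norm (f x) \<partial>M)"
proof -
  have iA: "integrable M (\<lambda>x. (norm v - \<delta>) * indicator A x :: real)" using A by simp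
  have "AE x in M. (norm v - \<delta>) * indicator A x \<le> norm (f x)"
    using close
  proof eventually_elim
    case (elim x)
    show ?case
    proof (cases "x \<in> A")
      case True
      have "norm v \<le> norm (f x) + norm (v - f x)" by (rule norm_triangle_sub)
      then show ?thesis using True elim by (simp add: norm_minus_commute)
    qed simp
  qed
  then have "(\<integral>x. (norm v - \<delta>) * indicator A x \<partial>M) \<le> (\<integral>x. norm (f x) \<partial>M)"
    by (rule integral_mono_AE[OF iA intf])
  then show ?thesis using A(1) m by (simp add: Int_absorb2 sets.sets_into_space mult.commute)
qed

lemma L1_aoh:
  assumes cm: "complete_measure M" and sf: "sigma_finite_measure M"
    and X: "alt_octahedral (UNIV :: 'b::banach set) norm"
  shows "alt_octahedral (L1_space M :: ('a \<Rightarrow> 'b) set) (L1_norm M)"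
  unfolding alt_octahedral_def
proof (intro allI impI)
  fix n :: nat and f :: "nat \<Rightarrow> 'a \<Rightarrow> 'b" and \<epsilon> :: real
  assume n: "1 \<le> n" and f: "\<forall>i<n. f i \<in> L1_space M \<and> L1_norm M (f i) = 1" and e: "\<epsilon> > 0"
  have smf: "strongly_measurable M (f i)" if "i < n" for i
    using f that unfolding L1_space_def by auto
  have intf: "integrable M (\<lambda>x. norm (f i x))" if "i < n" for i
    using L1_int(1)[OF cm, of "f i"] f that by auto
  have nf1: "(\<integral>x. norm (f i x) \<partial>M) = 1" if "i < n" for i
    using L1_int(2)[OF cm, of "f i"] f that by auto
  have n0: "0 < n" using n by simp
  have sp: "space M \<notin> null_sets M"
  proof
    assume "space M \<in> null_sets M"
    then have "AE x in M. norm (f 0 x) = 0" by (rule AE_I') auto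
    then have "(\<integral>x. norm (f 0 x) \<partial>M) = 0" by (rule integral_eq_zero_AE)
    then show False using nf1[OF n0] by simp
  qed
  obtain C :: "nat \<Rightarrow> 'a set" where C: "range C \<subseteq> sets M" "(\<Union>i. C i) = space M" "\<And>i. emeasure M (C i) \<noteq> \<infinity>"
    by (rule sigma_finite_measure.sigma_finite[OF sf]) auto
  obtain k where k: "C k \<notin> null_sets M"
  proof (rule ccontr)
    assume "\<not> thesis"
    then have "\<And>k. C k \<in> null_sets M" using that by blast
    then have "(\<Union>i. C i) \<in> null_sets M" by (rule null_sets_UN)
    then show False using sp C(2) by simp
  qed
  define B0 where "B0 = C k"
  have B0: "B0 \<in> sets M" "emeasure M B0 > 0" "emeasure M B0 < \<infinity>"
    using k C unfolding B0_def by (auto simp: null_sets_def zero_less_iff_neq_zero less_top)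
  define m0 where "m0 = measure M B0"
  have m0: "m0 \<ge> 0" unfolding m0_def by simp
  define \<delta> where "\<delta> = min (\<epsilon>/8) 1 / (m0 + 1)"
  have d: "\<delta> > 0" unfolding \<delta>_def using e m0 by simp
  obtain A v where A: "A \<in> sets M" "A \<subseteq> B0" "emeasure M A > 0"
    and v: "\<forall>i<n. AE x in M. x \<in> A \<longrightarrow> norm (f i x - v i) \<le> \<delta>"
    using localize_many[of n M f B0 \<delta>] smf B0(1,2) d by blast
  have Afin: "emeasure M A < \<infinity>"
    using emeasure_mono[OF A(2) B0(1)] B0(3) by (meson le_less_trans)
  define m where "m = measure M A"
  have em: "emeasure M A = ennreal m" unfolding m_def
    by (rule emeasure_eq_ennreal_measure) (use Afin in simp)
  have mpos: "m > 0" using A(3) unfolding em by simp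
  have mm0: "m \<le> m0" unfolding m_def m0_def
    by (rule measure_mono_fmeasurable[OF A(2) A(1)]) (use B0 in \<open>auto simp: fmeasurable_def\<close>)
  have dm: "\<delta> * m \<le> min (\<epsilon>/8) 1"
  proof -
    have "\<delta> * m \<le> \<delta> * m0" using mm0 d by simp
    also have "\<dots> = min (\<epsilon>/8) 1 * (m0 / (m0 + 1))" unfolding \<delta>_def by simp
    also have "\<dots> \<le> min (\<epsilon>/8) 1 * 1"
      using m0 e by (intro mult_left_mono) auto
    finally show ?thesis by simp
  qed
  define a where "a i = m *\<^sub>R v i" for i
  have na: "norm (a i) \<le> 1 + \<delta> * m" if i: "i < n" for i
  proof -
    have "m * (norm (v i) - \<delta>) \<le> 1"
      using L1_upper[OF intf[OF i] A(1) Afin m_def] v i nf1[OF i] by auto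
    then show ?thesis unfolding a_def using mpos by (simp add: algebra_simps)
  qed
  obtain w0 :: 'b where w0: "norm w0 = 1"
  proof (rule ccontr)
    assume "\<not> thesis"
    then have "\<And>w::'b. norm w \<noteq> 1" using that by blast
    have "w = 0" for w :: 'b
    proof (rule ccontr)
      assume "w \<noteq> 0"
      then have "norm (sgn w) = 1" by (simp add: norm_sgn)
      then show False using \<open>\<And>w::'b. norm w \<noteq> 1\<close> by blast
    qed
    then have "\<And>x. norm (f 0 x) = 0" by (metis norm_zero)
    then have "(\<integral>x. norm (f 0 x) \<partial>M) = 0" by simp
    then show False using nf1[OF n0] by simp
  qed
  define u where "u i = (if a i = 0 then w0 else sgn (a i))" for i
  have un: "\<forall>i<n. u i \<in> UNIV \<and> norm (u i) = 1" unfolding u_def using w0 by (simp add: norm_sgn)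
  define \<eta> where "\<eta> = \<epsilon> / 8"
  have eta: "\<eta> > 0" unfolding \<eta>_def using e by simp
  note X' = X[unfolded alt_octahedral_def, rule_format, of n u]
  have "\<forall>\<epsilon>>0. \<exists>y\<in>UNIV. norm y = 1 \<and> (\<forall>i<n. 2 - \<epsilon> \<le> max (norm (u i + y)) (norm (u i - y)))"
    using X'[OF n] un by simp
  from this[rule_format, OF eta] obtain z where z: "norm z = 1" "\<forall>i<n. 2 - \<eta> \<le> max (norm (u i + z)) (norm (u i - z))"
    by blast
  define y where "y x = indicator A x *\<^sub>R (z /\<^sub>R m)" for x
  have smy: "strongly_measurable M y" unfolding y_def
    by (rule sm_simple, rule simple_function_compose1[OF simple_function_indicator[OF A(1)]])
  have ny: "norm (y x) = indicator A x * (1 / m)" for x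
    unfolding y_def using z(1) mpos by (simp add: indicator_def inverse_eq_divide)
  have iy: "integrable M (\<lambda>x. norm (y x))" unfolding ny using A(1) Afin by simp
  have yL: "y \<in> L1_space M" by (rule L1_of_int(1)[OF cm smy iy])
  have y1: "L1_norm M y = 1"
  proof -
    have "L1_norm M y = (\<integral>x. norm (y x) \<partial>M)" by (rule L1_of_int(2)[OF cm smy iy])
    also have "\<dots> = m * (1 / m)" unfolding ny using A(1) m_def
      by (simp add: Int_absorb2 sets.sets_into_space)
    finally show ?thesis using mpos by simp
  qed
  have main: "2 - \<epsilon> \<le> max (L1_norm M (\<lambda>x. f i x + y x)) (L1_norm M (\<lambda>x. f i x - y x))"
    if i: "i < n" for i
  proof -
    have key: "1 + norm (a i + w) - norm (a i) - 2 * \<delta> * m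
        \<le> L1_norm M (\<lambda>x. f i x + indicator A x *\<^sub>R (w /\<^sub>R m))" for w
      using L1_lower[OF cm smf[OF i] intf[OF i] A(1) Afin m_def mpos, of "v i" \<delta> w] v i nf1[OF i]
      unfolding a_def by simp
    have sgnb: "norm (a i + w) - norm (a i) \<ge> 1 - 2 * \<eta>" if w: "norm w = 1" "2 - \<eta> \<le> norm (u i + w)" for w
    proof (cases "a i = 0")
      case True then show ?thesis using w eta by simp
    next
      case False
      then have "norm (a i + w) \<ge> norm (a i) + 1 - \<eta> * max 1 (norm (a i))"
        using oct_norm[OF w(1) False, of \<eta>] w(2) eta unfolding u_def by simp
      moreover have "\<eta> * max 1 (norm (a i)) \<le> \<eta> * 2"
        using na[OF i] dm eta by (intro mult_left_mono) auto
      ultimately show ?thesis by linarith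
    qed
    have e1: "(\<lambda>x. f i x + y x) = (\<lambda>x. f i x + indicator A x *\<^sub>R (z /\<^sub>R m))" unfolding y_def ..
    have e2: "(\<lambda>x. f i x - y x) = (\<lambda>x. f i x + indicator A x *\<^sub>R ((- z) /\<^sub>R m))"
      unfolding y_def by (simp add: scaleR_minus_right)
    have dm': "\<delta> * m \<le> \<epsilon>/8" "2 * \<delta> * m = 2 * (\<delta> * m)" using dm by auto
    have "2 - \<eta> \<le> norm (u i + z) \<or> 2 - \<eta> \<le> norm (u i + (- z))"
      using z(2) i by (auto simp: max_def split: if_splits)
    then show ?thesis
    proof
      assume h: "2 - \<eta> \<le> norm (u i + z)"
      have "2 - \<epsilon> \<le> L1_norm M (\<lambda>x. f i x + y x)"
      proof -
        have "2 - \<epsilon> \<le> 1 + norm (a i + z) - norm (a i) - 2 * \<delta> * m"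
          using sgnb[OF z(1) h] dm' e unfolding \<eta>_def by linarith
        then show ?thesis using key[of z] unfolding e1 by linarith
      qed
      then show ?thesis by linarith
    next
      assume h: "2 - \<eta> \<le> norm (u i + (- z))"
      have "2 - \<epsilon> \<le> L1_norm M (\<lambda>x. f i x - y x)"
        using key[of "- z"] sgnb[of "- z"] z(1) h dm' e unfolding e2 \<eta>_def by simp
      then show ?thesis by linarith
    qed
  qed
  show "\<exists>y\<in>L1_space M. L1_norm M y = 1 \<and>
           (\<forall>i<n. 2 - \<epsilon> \<le> max (L1_norm M (f i + y)) (L1_norm M (f i - y)))"
    unfolding plus_fun_def fun_diff_def using yL y1 main by (intro bexI[of _ y] conjI allI impI) auto
qed


theorem proposition4p4:
  fixes M :: "'a measure"
  assumes "complete_measure M"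
    and "sigma_finite_measure M"
    and "alt_octahedral (UNIV :: 'b::banach set) norm"
  shows "alt_octahedral (L1_space M :: ('a \<Rightarrow> 'b) set) (L1_norm M)
       \<and> alt_octahedral (Linf_space M :: ('a \<Rightarrow> 'b) set) (Linf_norm M)"
  using L1_aoh[OF assms(1,2,3)] Linf_aoh[OF assms(1,3)] by blast

end
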